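(* For all $\alpha\ge1$ and $a,b\ge0$, $$|\gamma(\alpha,a)-\gamma(\alpha,b)|\ge|a-b|(ab)^{\frac{\alpha-1}{2}}e^{-\frac{a+b}{2}},$$ where $\gamma(\alpha,x)=\int_0^x t^{\alpha-1}e^{-t}\,dt$ is the lower incomplete gamma function. *)

theory Defs
  imports "HOL-Analysis.Analysis"
begin

(* real power with the convention 0^0 = 1 (Isabelle's powr has 0 powr 0 = 0) *)
definition rpow :: "real \<Rightarrow> real \<Rightarrow> real" where
  "rpow x y = (if y = 0 then 1 else x powr y)"

definition lower_inc_gamma :: "real \<Rightarrow> real \<Rightarrow> real" where
  "lower_inc_gamma \<alpha> x = integral {0..x} (\<lambda>t. rpow t (\<alpha> - 1) * exp (- t))"

end

theory Submission
  imports Defs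
begin

definition ff :: "real \<Rightarrow> real \<Rightarrow> real" where
  "ff \<alpha> t = rpow t (\<alpha> - 1) * exp (- t)"

lemma ff_cont: assumes "\<alpha> \<ge> 1" shows "continuous_on {0..} (ff \<alpha>)"
proof (cases "\<alpha> = 1")
  case True
  then show ?thesis unfolding ff_def rpow_def by (auto intro!: continuous_intros)
next
  case False
  then have "ff \<alpha> = (\<lambda>t. t powr (\<alpha> - 1) * exp (- t))"
    by (auto simp: ff_def rpow_def fun_eq_iff)
  moreover have "continuous_on {0..} (\<lambda>t::real. t powr (\<alpha> - 1))"
    using False assms by (intro continuous_on_powr') (auto intro!: continuous_intros)
  ultimately show ?thesis by (auto intro!: continuous_intros)
qed

lemma ff_int: assumes "\<alpha> \<ge> 1" "0 \<le> a" shows "ff \<alpha> integrable_on {a..b}"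
  by (rule integrable_continuous_interval, rule continuous_on_subset[OF ff_cont[OF assms(1)]])
     (use assms in auto)

lemma rpow_mult': "0 \<le> x \<Longrightarrow> 0 \<le> y \<Longrightarrow> rpow (x*y) e = rpow x e * rpow y e"
  by (simp add: rpow_def powr_mult)

lemma rpow_mono': "0 \<le> x \<Longrightarrow> x \<le> y \<Longrightarrow> 0 \<le> e \<Longrightarrow> rpow x e \<le> rpow y e"
  by (simp add: rpow_def powr_mono2)

lemma rpow_nonneg: "0 \<le> rpow x e"
  by (simp add: rpow_def)

lemma rpow_half: "0 \<le> x \<Longrightarrow> rpow x (e/2) * rpow x (e/2) = rpow x e"
  by (simp add: rpow_def powr_add[symmetric])

lemma pointwise:
  assumes "\<alpha> \<ge> 1" "0 \<le> a" "a \<le> t" "t \<le> b"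
  shows "2 * (rpow (a * b) ((\<alpha> - 1) / 2) * exp (- (a + b) / 2)) \<le> ff \<alpha> t + ff \<alpha> (a + b - t)"
proof -
  define C where "C = rpow (a * b) ((\<alpha> - 1) / 2) * exp (- (a + b) / 2)"
  define u where "u = ff \<alpha> t"
  define v where "v = ff \<alpha> (a + b - t)"
  have C0: "C \<ge> 0" unfolding C_def by (simp add: rpow_nonneg)
  have u0: "u \<ge> 0" and v0: "v \<ge> 0" unfolding u_def v_def ff_def by (simp_all add: rpow_nonneg)
  have ab: "a * b \<le> t * (a + b - t)"
  proof -
    have "0 \<le> (t - a) * (b - t)" using assms by simp
    then show ?thesis by (simp add: algebra_simps)
  qed
  have "C * C = rpow (a*b) (\<alpha> - 1) * (exp (- (a + b) / 2) * exp (- (a + b) / 2))"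
    unfolding C_def using rpow_half[of "a*b" "\<alpha>-1"] assms by (simp add: algebra_simps)
  also have "exp (- (a + b) / 2) * exp (- (a + b) / 2) = exp (- t) * exp (- (a + b - t))"
    by (simp flip: exp_add)
  also have "rpow (a*b) (\<alpha> - 1) \<le> rpow (t * (a + b - t)) (\<alpha> - 1)"
    using assms ab by (intro rpow_mono') auto
  also have "rpow (t * (a + b - t)) (\<alpha> - 1) = rpow t (\<alpha> - 1) * rpow (a + b - t) (\<alpha> - 1)"
    using assms by (intro rpow_mult') auto
  finally have "C * C \<le> u * v" unfolding u_def v_def ff_def by (simp add: algebra_simps)
  moreover have "4 * (u * v) \<le> (u+v)^2"
    using sum_squares_ge_zero[of "u-v" 0] by (simp add: power2_eq_square algebra_simps)
  ultimately have "(2*C)^2 \<le> (u+v)^2"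
    by (simp add: power2_eq_square)
  then have "2*C \<le> u+v" using u0 v0 C0 power2_le_imp_le[of "2*C" "u+v"] by simp
  then show ?thesis unfolding C_def u_def v_def .
qed

lemma main_le:
  assumes "\<alpha> \<ge> 1" "0 \<le> a" "a \<le> b"
  shows "lower_inc_gamma \<alpha> b - lower_inc_gamma \<alpha> a
           \<ge> (b - a) * rpow (a * b) ((\<alpha> - 1) / 2) * exp (- (a + b) / 2)"
proof -
  define C where "C = rpow (a * b) ((\<alpha> - 1) / 2) * exp (- (a + b) / 2)"
  have gam: "lower_inc_gamma \<alpha> x = integral {0..x} (ff \<alpha>)" for x
    unfolding lower_inc_gamma_def ff_def ..
  have "integral {0..a} (ff \<alpha>) + integral {a..b} (ff \<alpha>) = integral {0..b} (ff \<alpha>)"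
    using assms by (intro Henstock_Kurzweil_Integration.integral_combine ff_int) auto
  then have d: "lower_inc_gamma \<alpha> b - lower_inc_gamma \<alpha> a = integral {a..b} (ff \<alpha>)"
    unfolding gam by simp
  define g where "g = (\<lambda>x. ff \<alpha> (a + b + x))"
  have "integral {a..b} (\<lambda>t. ff \<alpha> (a + b - t)) = integral {-b..-a} g"
    using Henstock_Kurzweil_Integration.integral_reflect_real[of "-a" "-b" g] by (simp add: g_def)
  also have "\<dots> = integral {a..b} (ff \<alpha>)"
    using integral_shift_Icc_real[of "-b" "-a" "ff \<alpha>" "a+b"] by (simp add: g_def o_def add_ac)
  finally have refl: "integral {a..b} (\<lambda>t. ff \<alpha> (a + b - t)) = integral {a..b} (ff \<alpha>)" .
  have i1: "ff \<alpha> integrable_on {a..b}" using assms by (intro ff_int) auto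
  have "continuous_on {a..b} (\<lambda>t. ff \<alpha> (a + b - t))"
    by (rule continuous_on_compose2[OF ff_cont[OF assms(1)]]) (use assms in \<open>auto intro!: continuous_intros\<close>)
  then have i2: "(\<lambda>t. ff \<alpha> (a + b - t)) integrable_on {a..b}"
    by (rule integrable_continuous_interval)
  have "integral {a..b} (\<lambda>t. 2 * C) \<le> integral {a..b} (\<lambda>t. ff \<alpha> t + ff \<alpha> (a + b - t))"
    using assms unfolding C_def by (intro integral_le integrable_add i1 i2 pointwise) auto
  also have "\<dots> = 2 * integral {a..b} (ff \<alpha>)"
    using integral_add[OF i1 i2] refl by simp
  finally have "(b - a) * (2 * C) \<le> 2 * integral {a..b} (ff \<alpha>)" using assms by simp
  then show ?thesis using d unfolding C_def by (simp add: algebra_simps)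
qed

theorem mainTheorem14:
  fixes \<alpha> a b :: real
  assumes "\<alpha> \<ge> 1" and "a \<ge> 0" and "b \<ge> 0"
  shows "\<bar>lower_inc_gamma \<alpha> a - lower_inc_gamma \<alpha> b\<bar>
           \<ge> \<bar>a - b\<bar> * rpow (a * b) ((\<alpha> - 1) / 2) * exp (- (a + b) / 2)"
proof (cases "a \<le> b")
  case True
  then show ?thesis using main_le[OF assms(1,2) True] by (simp add: abs_if)
next
  case False
  then show ?thesis using main_le[OF assms(1,3), of a] by (simp add: abs_if mult.commute add.commute)
qed

end
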